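(* Let $m$ be a positive integer and $n = 2m$. If $m$ is sufficiently large, then the deterministic query complexity of $f_{n,m}$ satisfies $D(f_{n,m}) \ge m^2$.
   Context: Let $n,m$ be positive integers, $M=[n]\times[m]$ (a grid of cells with $n$ rows and $m$ columns), $\tilde M = M\cup\{\bot\}$ (pointers to cells, $\bot$ is the null pointer) and $\tilde C=[m]\cup\{\bot\}$ (pointers to columns). Let $T$ be the following fixed binary tree with $m$ leaves and $m-1$ internal nodes: if $m=2^k$, $T$ is the complete binary tree with $2^k$ leaves; if $2^k<m<2^{k+1}$, take the complete binary tree with $2^k$ leaves and add a pair of children to each of its $m-2^k$ leftmost leaves. The two outgoing arcs of each internal node are labeled 'left' and 'right', and the leaves are labeled $1,\dots,m$ from left to right. For a leaf $j$, $T(j)$ denotes the sequence of 'left'/'right' labels on the path from the root to leaf $j$. The input alphabet is $\Sigma=\{0,1\}\times\tilde M\times\tilde M\times\tilde C$; for $v\in\Sigma$ its four components are called $\mathrm{val}(v)$, $\mathrm{lpoint}(v)$, $\mathrm{rpoint}(v)$, $\mathrm{bpoint}(v)$. The function $f_{n,m}\colon\Sigma^M\to\{0,1\}$ is defined by $f_{n,m}(x)=1$ iff: (1) there is exactly one column $b\in[m]$ with $\mathrm{val}(x_{i,b})=1$ for all $i\in[n]$ (the marked column); (2) in column $b$ there is a unique cell $a$ with $x_a\ne(1,\bot,\bot,\bot)$ (the special element); (3) for each column $j\in[m]\setminus\{b\}$, the path starting at $a$ and following the pointers $\mathrm{lpoint},\mathrm{rpoint}$ as specified by the sequence $T(j)$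 exists (no pointer on it is $\bot$) and ends in a cell $\ell_j$ lying in column $j$ with $\mathrm{val}(x_{\ell_j})=0$; (4) $\mathrm{bpoint}(x_{\ell_j})=b$ for every $j\in[m]\setminus\{b\}$. $D(f)$ denotes the minimum, over deterministic decision trees computing $f$, of the maximum number of queries on any input, where a query asks for the value $x_c\in\Sigma$ of one cell $c\in M$. *)

theory Defs
  imports Main
begin

type_synonym cell = "nat \<times> nat"  (* (row, column), 1-indexed *)

(* an element of Sigma = {0,1} x ~M x ~M x ~C ; val 1 is True, bottom is None *)
type_synonym sym = "bool \<times> cell option \<times> cell option \<times> nat option"

definition cells :: "nat \<Rightarrow> nat \<Rightarrow> cell set" where
  "cells n m = {1..n} \<times> {1..m}"

definition val :: "sym \<Rightarrow> bool" where "val v = fst v"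
definition lpoint :: "sym \<Rightarrow> cell option" where "lpoint v = fst (snd v)"
definition rpoint :: "sym \<Rightarrow> cell option" where "rpoint v = fst (snd (snd v))"
definition bpoint :: "sym \<Rightarrow> nat option" where "bpoint v = snd (snd (snd v))"

definition valid_sym :: "nat \<Rightarrow> nat \<Rightarrow> sym \<Rightarrow> bool" where
  "valid_sym n m v \<longleftrightarrow>
     (\<forall>c. lpoint v = Some c \<longrightarrow> c \<in> cells n m) \<and>
     (\<forall>c. rpoint v = Some c \<longrightarrow> c \<in> cells n m) \<and>
     (\<forall>j. bpoint v = Some j \<longrightarrow> j \<in> {1..m})"

(* inputs x in Sigma^M; values outside M are irrelevant (never read) *)
definition inputs :: "nat \<Rightarrow> nat \<Rightarrow> (cell \<Rightarrow> sym) set" where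
  "inputs n m = {x. \<forall>c\<in>cells n m. valid_sym n m (x c)}"

datatype btree = Lf | Nd btree btree

fun complete :: "nat \<Rightarrow> btree" where
  "complete 0 = Lf"
| "complete (Suc k) = Nd (complete k) (complete k)"

(* add a pair of children to the r leftmost leaves; returns the number of unused additions *)
fun grow :: "nat \<Rightarrow> btree \<Rightarrow> btree \<times> nat" where
  "grow 0 t = (t, 0)"
| "grow (Suc r) Lf = (Nd Lf Lf, r)"
| "grow r (Nd l t) = (let (l', r1) = grow r l; (t', r2) = grow r1 t in (Nd l' t', r2))"

(* root-to-leaf label sequences of the leaves, from left to right; False = left, True = right *)
fun leaf_paths :: "btree \<Rightarrow> bool list list" where
  "leaf_paths Lf = [[]]"
| "leaf_paths (Nd l r) = map (Cons False) (leaf_paths l) @ map (Cons True) (leaf_paths r)"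

definition T_tree :: "nat \<Rightarrow> btree" where
  "T_tree m = (let k = (GREATEST k. 2 ^ k \<le> m) in fst (grow (m - 2 ^ k) (complete k)))"

definition T_path :: "nat \<Rightarrow> nat \<Rightarrow> bool list" where
  "T_path m j = leaf_paths (T_tree m) ! (j - 1)"

fun follow :: "(cell \<Rightarrow> sym) \<Rightarrow> cell \<Rightarrow> bool list \<Rightarrow> cell option" where
  "follow x a [] = Some a"
| "follow x a (d # ds) =
     (case (if d then rpoint (x a) else lpoint (x a)) of
        None \<Rightarrow> None
      | Some c \<Rightarrow> follow x c ds)"

definition f :: "nat \<Rightarrow> nat \<Rightarrow> (cell \<Rightarrow> sym) \<Rightarrow> bool" where
  "f n m x \<longleftrightarrow>
     (\<exists>b\<in>{1..m}.
        (\<forall>i\<in>{1..n}. val (x (i, b))) \<and>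
        (\<forall>b'\<in>{1..m}. (\<forall>i\<in>{1..n}. val (x (i, b'))) \<longrightarrow> b' = b) \<and>
        (\<exists>a\<in>cells n m. snd a = b \<and> x a \<noteq> (True, None, None, None) \<and>
           (\<forall>a'\<in>cells n m. snd a' = b \<and> x a' \<noteq> (True, None, None, None) \<longrightarrow> a' = a) \<and>
           (\<forall>j\<in>{1..m} - {b}. \<exists>l. follow x a (T_path m j) = Some l \<and> snd l = j \<and>
               \<not> val (x l) \<and> bpoint (x l) = Some b)))"

datatype dtree = Leaf bool | Query cell "sym \<Rightarrow> dtree"

primrec eval :: "dtree \<Rightarrow> (cell \<Rightarrow> sym) \<Rightarrow> bool" where
  "eval (Leaf b) x = b"
| "eval (Query c k) x = eval (k (x c)) x"

primrec cost :: "dtree \<Rightarrow> (cell \<Rightarrow> sym) \<Rightarrow> nat" where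
  "cost (Leaf b) x = 0"
| "cost (Query c k) x = Suc (cost (k (x c)) x)"

primrec queries_in :: "cell set \<Rightarrow> dtree \<Rightarrow> bool" where
  "queries_in A (Leaf b) = True"
| "queries_in A (Query c k) = (c \<in> A \<and> (\<forall>v. queries_in A (k v)))"

definition computes :: "nat \<Rightarrow> nat \<Rightarrow> dtree \<Rightarrow> bool" where
  "computes n m t \<longleftrightarrow> queries_in (cells n m) t \<and> (\<forall>x\<in>inputs n m. eval t x = f n m x)"

definition D :: "nat \<Rightarrow> nat \<Rightarrow> nat" where
  "D n m = (LEAST k. \<exists>t. computes n m t \<and> (\<forall>x\<in>inputs n m. cost t x \<le> k))"

end

theory Submission
  imports Defs
begin

fun ip :: "btree \<Rightarrow> bool list set" where
  "ip Lf = {}"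
| "ip (Nd l r) = insert [] (Cons False ` ip l \<union> Cons True ` ip r)"

lemma ip_finite: "finite (ip t)"
  by (induction t) auto

lemma ip_card: "card (ip t) + 1 = length (leaf_paths t)"
proof (induction t)
  case Lf then show ?case by simp
next
  case (Nd l r)
  have d: "[] \<notin> Cons False ` ip l \<union> Cons True ` ip r" by auto
  have d2: "Cons False ` ip l \<inter> Cons True ` ip r = {}" by auto
  have "card (ip (Nd l r)) = Suc (card (Cons False ` ip l \<union> Cons True ` ip r))"
    using d ip_finite by simp
  also have "\<dots> = Suc (card (ip l) + card (ip r))"
    using d2 ip_finite by (simp add: card_Un_disjoint card_image)
  finally show ?case using Nd by simp
qed

lemma lp_distinct: "distinct (leaf_paths t)"
  by (induction t) (auto simp: distinct_map)

lemma lp_ne: "leaf_paths t \<noteq> []"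
  by (induction t) auto

lemma lp_ip_disj: "q \<in> set (leaf_paths t) \<Longrightarrow> q \<notin> ip t"
  by (induction t arbitrary: q) auto

lemma lp_prefix: "p @ s \<in> set (leaf_paths t) \<Longrightarrow> s \<noteq> [] \<Longrightarrow> p \<in> ip t"
proof (induction t arbitrary: p)
  case Lf then show ?case by simp
next
  case (Nd l r)
  then show ?case by (cases p) auto
qed

lemma nl_complete: "length (leaf_paths (complete k)) = 2 ^ k"
  by (induction k) auto

lemma grow_prop: "length (leaf_paths (fst (grow r t))) = length (leaf_paths t) + min r (length (leaf_paths t))
   \<and> snd (grow r t) = r - length (leaf_paths t)"
proof (induction r t rule: grow.induct)
  case (1 t) then show ?case by simp
next
  case (2 r) then show ?case by simp
next
  case (3 v l t)
  obtain l' r1 where e1: "grow (Suc v) l = (l', r1)" by fastforce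
  obtain t' r2 where e2: "grow r1 t = (t', r2)" by fastforce

  have IH1: "length (leaf_paths l') = length (leaf_paths l) + min (Suc v) (length (leaf_paths l)) \<and> r1 = Suc v - length (leaf_paths l)"
    using "3.IH"(1) e1 by simp
  have IH2: "length (leaf_paths t') = length (leaf_paths t) + min r1 (length (leaf_paths t)) \<and> r2 = r1 - length (leaf_paths t)"
    using "3.IH"(2)[OF e1[symmetric] refl] e2 by simp
  have g: "grow (Suc v) (Nd l t) = (Nd l' t', r2)" using e1 e2 by simp
  show ?case unfolding g using IH1 IH2 by (auto simp: min_def split: if_splits)
qed

lemma T_len: assumes "m \<ge> 1" shows "length (leaf_paths (T_tree m)) = m"
proof -
  define k where "k = (GREATEST k. 2 ^ k \<le> m)"
  have bnd: "y \<le> m" if "2 ^ y \<le> m" for y :: nat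
  proof -
    have "y < 2 ^ y" by (rule less_exp)
    then show "y \<le> m" using that by linarith
  qed
  have P: "2 ^ k \<le> m" unfolding k_def
    apply (rule GreatestI_nat[of _ 0 m])
    using assms apply simp
    using bnd apply blast
    done
  have "\<not> 2 ^ Suc k \<le> m"
  proof
    assume a: "2 ^ Suc k \<le> m"
    have "Suc k \<le> (GREATEST k. 2 ^ k \<le> m)"
      apply (rule Greatest_le_nat[of "\<lambda>k. 2 ^ k \<le> m" "Suc k" m])
      using a apply simp
      using bnd apply blast
      done
    then show False using k_def by simp
  qed
  then have Q: "m - 2 ^ k \<le> 2 ^ k" by simp
  have T: "T_tree m = fst (grow (m - 2 ^ k) (complete k))" unfolding T_tree_def k_def by (simp only: Let_def)
  have "length (leaf_paths (fst (grow (m - 2 ^ k) (complete k)))) = 2 ^ k + min (m - 2 ^ k) (2 ^ k)"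
    using grow_prop[of "m - 2^k" "complete k"] nl_complete[of k] by simp
  then show ?thesis using T P Q by simp
qed

definition blank1 :: sym where "blank1 = (True, None, None, None)"
definition enum :: "nat \<Rightarrow> nat \<Rightarrow> nat \<Rightarrow> nat" where
  "enum m j s = (if s + 1 < j then s + 1 else min m (s + 2))"
definition Qcol :: "(cell \<Rightarrow> sym option) \<Rightarrow> nat \<Rightarrow> cell set" where
  "Qcol \<sigma> j = {c \<in> dom \<sigma>. snd c = j}"
definition ans :: "nat \<Rightarrow> (cell \<Rightarrow> sym option) \<Rightarrow> cell \<Rightarrow> sym" where
  "ans m \<sigma> c = (if card (Qcol \<sigma> (snd c)) < m then blank1
      else (False, None, None, Some (enum m (snd c) (card (Qcol \<sigma> (snd c)) - m))))"
definition adv :: "nat \<Rightarrow> (cell \<Rightarrow> sym option) \<Rightarrow> cell \<Rightarrow> sym" where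
  "adv m \<sigma> c = (case \<sigma> c of Some v \<Rightarrow> v | None \<Rightarrow> ans m \<sigma> c)"

primrec run :: "dtree \<Rightarrow> nat \<Rightarrow> (cell \<Rightarrow> sym option) \<Rightarrow> (cell \<Rightarrow> sym option)" where
  "run (Leaf b) m \<sigma> = \<sigma>"
| "run (Query c k) m \<sigma> = run (k (adv m \<sigma> c)) m (\<sigma>(c \<mapsto> adv m \<sigma> c))"

definition Inv :: "nat \<Rightarrow> (cell \<Rightarrow> sym option) \<Rightarrow> bool" where
  "Inv m \<sigma> \<longleftrightarrow> dom \<sigma> \<subseteq> cells (2*m) m \<and>
   (\<forall>c v. \<sigma> c = Some v \<longrightarrow> v = blank1 \<or> (\<exists>k\<in>{1..m}. v = (False,None,None,Some k))) \<and>
   (\<forall>j. card (Qcol \<sigma> j) \<le> m \<longrightarrow> (\<forall>c\<in>Qcol \<sigma> j. \<sigma> c = Some blank1)) \<and>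
   (\<forall>j s. s + m < card (Qcol \<sigma> j) \<longrightarrow> (\<exists>c\<in>Qcol \<sigma> j. \<sigma> c = Some (False,None,None,Some (enum m j s))))"

definition cons :: "(cell \<Rightarrow> sym option) \<Rightarrow> (cell \<Rightarrow> sym) \<Rightarrow> bool" where
  "cons \<sigma> x \<longleftrightarrow> (\<forall>c v. \<sigma> c = Some v \<longrightarrow> x c = v)"

lemma finite_cells: "finite (cells n m)" unfolding cells_def by simp

lemma enum_range: "m \<ge> 1 \<Longrightarrow> j \<le> m \<Longrightarrow> enum m j s \<in> {1..m}"
  unfolding enum_def by auto

lemma Inv_empty: "Inv m Map.empty"
  unfolding Inv_def Qcol_def by simp

lemma Inv_upd:
  assumes m: "m \<ge> 1" and I: "Inv m \<sigma>" and c: "c \<in> cells (2*m) m"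
  shows "Inv m (\<sigma>(c \<mapsto> adv m \<sigma> c))"
proof (cases "c \<in> dom \<sigma>")
  case True
  then obtain v where v: "\<sigma> c = Some v" by auto
  then have "\<sigma>(c \<mapsto> adv m \<sigma> c) = \<sigma>" unfolding adv_def by auto
  then show ?thesis using I by simp
next
  case False
  have I1: "dom \<sigma> \<subseteq> cells (2*m) m"
   and I2: "\<forall>c v. \<sigma> c = Some v \<longrightarrow> v = blank1 \<or> (\<exists>k\<in>{1..m}. v = (False,None,None,Some k))"
   and I3: "\<forall>j. card (Qcol \<sigma> j) \<le> m \<longrightarrow> (\<forall>c\<in>Qcol \<sigma> j. \<sigma> c = Some blank1)"
   and I4: "\<forall>j s. s + m < card (Qcol \<sigma> j) \<longrightarrow> (\<exists>c\<in>Qcol \<sigma> j. \<sigma> c = Some (False,None,None,Some (enum m j s)))"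
    using I unfolding Inv_def by blast+
  define j0 where "j0 = snd c"
  define t where "t = card (Qcol \<sigma> j0)"
  define \<sigma>' where "\<sigma>' = \<sigma>(c \<mapsto> adv m \<sigma> c)"
  have adv: "adv m \<sigma> c = (if t < m then blank1 else (False, None, None, Some (enum m j0 (t - m))))"
  proof -
    have "\<sigma> c = None" using False by auto
    then show ?thesis unfolding adv_def ans_def t_def j0_def by simp
  qed
  have fin: "finite (Qcol \<sigma> j)" for j
  proof -
    have "Qcol \<sigma> j \<subseteq> cells (2*m) m" using I unfolding Inv_def Qcol_def by auto
    then show ?thesis using finite_cells finite_subset by blast
  qed
  have Q': "Qcol \<sigma>' j = (if j = j0 then insert c (Qcol \<sigma> j) else Qcol \<sigma> j)" for j
    unfolding Qcol_def \<sigma>'_def j0_def by auto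
  have cnot: "c \<notin> Qcol \<sigma> j" for j using False unfolding Qcol_def by auto
  have card': "card (Qcol \<sigma>' j) = (if j = j0 then Suc (card (Qcol \<sigma> j)) else card (Qcol \<sigma> j))" for j
    using Q' fin cnot by simp
  have s1: "\<sigma>' x = \<sigma> x" if "x \<noteq> c" for x using that unfolding \<sigma>'_def by simp
  have jm: "j0 \<le> m" using c unfolding cells_def j0_def by auto
  have "dom \<sigma>' \<subseteq> cells (2*m) m" using I c unfolding Inv_def \<sigma>'_def by auto
  moreover have "\<forall>c' v. \<sigma>' c' = Some v \<longrightarrow> v = blank1 \<or> (\<exists>k\<in>{1..m}. v = (False,None,None,Some k))"
  proof (intro allI impI)
    fix c' v assume h: "\<sigma>' c' = Some v"
    show "v = blank1 \<or> (\<exists>k\<in>{1..m}. v = (False,None,None,Some k))"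
    proof (cases "c' = c")
      case True
      then have "v = adv m \<sigma> c" using h unfolding \<sigma>'_def by simp
      then show ?thesis using adv enum_range[OF m jm] by auto
    next
      case False
      then have "\<sigma> c' = Some v" using h s1 by simp
      then show ?thesis using I2 by blast
    qed
  qed
  moreover have "\<forall>j. card (Qcol \<sigma>' j) \<le> m \<longrightarrow> (\<forall>c'\<in>Qcol \<sigma>' j. \<sigma>' c' = Some blank1)"
  proof (intro allI impI ballI)
    fix j c' assume h1: "card (Qcol \<sigma>' j) \<le> m" and h2: "c' \<in> Qcol \<sigma>' j"
    show "\<sigma>' c' = Some blank1"
    proof (cases "j = j0")
      case True
      then have tm: "Suc t \<le> m" using h1 card' t_def by simp
      show ?thesis
      proof (cases "c' = c")
        case True then show ?thesis using adv tm unfolding \<sigma>'_def by simp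
      next
        case False
        then have cq: "c' \<in> Qcol \<sigma> j0" using h2 Q' \<open>j = j0\<close> by auto
        have "card (Qcol \<sigma> j0) \<le> m" using tm t_def by simp
        then have "\<sigma> c' = Some blank1" using I3 cq by blast
        then show ?thesis using False s1 by simp
      qed
    next
      case False
      then have cq: "c' \<in> Qcol \<sigma> j" "c' \<noteq> c" using h2 Q' cnot by auto
      have "card (Qcol \<sigma> j) \<le> m" using h1 card' False by simp
      then have "\<sigma> c' = Some blank1" using I3 cq by blast
      then show ?thesis using cq s1 by simp
    qed
  qed
  moreover have "\<forall>j s. s + m < card (Qcol \<sigma>' j) \<longrightarrow> (\<exists>c'\<in>Qcol \<sigma>' j. \<sigma>' c' = Some (False,None,None,Some (enum m j s)))"
  proof (intro allI impI)
    fix j s assume h: "s + m < card (Qcol \<sigma>' j)"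
    show "\<exists>c'\<in>Qcol \<sigma>' j. \<sigma>' c' = Some (False,None,None,Some (enum m j s))"
    proof (cases "j = j0 \<and> s + m = t")
      case True
      then have "\<sigma>' c = Some (False,None,None,Some (enum m j s))"
        using adv m unfolding \<sigma>'_def by auto
      moreover have "c \<in> Qcol \<sigma>' j" using Q' True by simp
      ultimately show ?thesis by blast
    next
      case False
      then have "s + m < card (Qcol \<sigma> j)" using h card' t_def by (auto split: if_splits)
      then obtain c' where "c' \<in> Qcol \<sigma> j" "\<sigma> c' = Some (False,None,None,Some (enum m j s))"
        using I4 by blast
      moreover then have "c' \<noteq> c" using cnot by auto
      ultimately have "c' \<in> Qcol \<sigma>' j" "\<sigma>' c' = Some (False,None,None,Some (enum m j s))"
        using Q' s1 by auto
      then show ?thesis by blast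
    qed
  qed
  ultimately show ?thesis unfolding Inv_def \<sigma>'_def by blast
qed

lemma run_prop:
  assumes "queries_in (cells (2*m) m) t" "Inv m \<sigma>" "m \<ge> 1"
  shows "Inv m (run t m \<sigma>) \<and> \<sigma> \<subseteq>\<^sub>m run t m \<sigma> \<and>
     (\<forall>x. cons (run t m \<sigma>) x \<longrightarrow> card (dom (run t m \<sigma>)) \<le> card (dom \<sigma>) + cost t x) \<and>
     (\<forall>x y. cons (run t m \<sigma>) x \<longrightarrow> cons (run t m \<sigma>) y \<longrightarrow> eval t x = eval t y)"
  using assms
proof (induction t arbitrary: \<sigma>)
  case (Leaf b)
  then show ?case by (simp add: map_le_def)
next
  case (Query c k)
  define v where "v = adv m \<sigma> c"
  define \<sigma>1 where "\<sigma>1 = \<sigma>(c \<mapsto> v)"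
  have q: "queries_in (cells (2*m) m) (k v)" "c \<in> cells (2*m) m" 
  proof -
    have qa: "c \<in> cells (2*m) m \<and> (\<forall>v. queries_in (cells (2*m) m) (k v))"
      using Query.prems(1) by simp
    then show "queries_in (cells (2*m) m) (k v)" "c \<in> cells (2*m) m" by blast+
  qed
  have I1: "Inv m \<sigma>1" using Inv_upd[OF Query.prems(3,2) q(2)] unfolding \<sigma>1_def v_def .
  have IH: "Inv m (run (k v) m \<sigma>1) \<and> \<sigma>1 \<subseteq>\<^sub>m run (k v) m \<sigma>1 \<and>
     (\<forall>x. cons (run (k v) m \<sigma>1) x \<longrightarrow> card (dom (run (k v) m \<sigma>1)) \<le> card (dom \<sigma>1) + cost (k v) x) \<and>
     (\<forall>x y. cons (run (k v) m \<sigma>1) x \<longrightarrow> cons (run (k v) m \<sigma>1) y \<longrightarrow> eval (k v) x = eval (k v) y)"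
    by (rule Query.IH[OF rangeI q(1) I1 Query.prems(3)])
  have r: "run (Query c k) m \<sigma> = run (k v) m \<sigma>1" unfolding v_def \<sigma>1_def by simp
  have le1: "\<sigma> \<subseteq>\<^sub>m \<sigma>1"
  proof -
    have "\<sigma> c = None \<or> \<sigma> c = Some v" unfolding v_def adv_def by (cases "\<sigma> c") auto
    then show ?thesis unfolding \<sigma>1_def map_le_def by auto
  qed
  have fin: "finite (dom \<sigma>)" using Query.prems(2) finite_cells unfolding Inv_def
    by (meson finite_subset)
  have cd: "card (dom \<sigma>1) \<le> Suc (card (dom \<sigma>))" unfolding \<sigma>1_def using fin
    by (simp add: card_insert_if)
  have xc: "x c = v" if "cons (run (k v) m \<sigma>1) x" for x
  proof -
    have "\<sigma>1 c = Some v" unfolding \<sigma>1_def by simp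
    moreover have "\<sigma>1 \<subseteq>\<^sub>m run (k v) m \<sigma>1" using IH by blast
    ultimately have "run (k v) m \<sigma>1 c = Some v" unfolding map_le_def
      by (metis domI)
    then show ?thesis using that unfolding cons_def by blast
  qed
  show ?case unfolding r
  proof (intro conjI allI impI)
    show "Inv m (run (k v) m \<sigma>1)" using IH by blast
    show "\<sigma> \<subseteq>\<^sub>m run (k v) m \<sigma>1" using IH le1 map_le_trans by blast
  next
    fix x assume h: "cons (run (k v) m \<sigma>1) x"
    have "card (dom (run (k v) m \<sigma>1)) \<le> card (dom \<sigma>1) + cost (k v) x" using IH h by blast
    then show "card (dom (run (k v) m \<sigma>1)) \<le> card (dom \<sigma>) + cost (Query c k) x"
      using cd xc[OF h] by simp
  next
    fix x y assume h: "cons (run (k v) m \<sigma>1) x" "cons (run (k v) m \<sigma>1) y"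
    have "eval (k v) x = eval (k v) y" using IH h by blast
    then show "eval (Query c k) x = eval (Query c k) y" using xc[OF h(1)] xc[OF h(2)] by simp
  qed
qed

lemma follow_local:
  assumes x: "x \<in> inputs n m" and agree: "\<forall>c\<in>cells n m. x' c = x c" and a: "a \<in> cells n m"
  shows "follow x' a p = follow x a p \<and> (\<forall>l. follow x a p = Some l \<longrightarrow> l \<in> cells n m)"
  using a
proof (induction p arbitrary: a)
  case Nil then show ?case by simp
next
  case (Cons d ds)
  have xa: "x' a = x a" using agree Cons.prems by blast
  have v: "valid_sym n m (x a)" using x Cons.prems unfolding inputs_def by blast
  show ?case
  proof (cases "(if d then rpoint (x a) else lpoint (x a))")
    case None
    then show ?thesis using xa by (cases d) simp_all
  next
    case (Some c)
    then have "c \<in> cells n m" using v unfolding valid_sym_def by (cases d) auto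
    then have "follow x' c ds = follow x c ds \<and> (\<forall>l. follow x c ds = Some l \<longrightarrow> l \<in> cells n m)"
      using Cons.IH by blast
    show ?thesis
    proof (cases d)
      case True
      then have "rpoint (x' a) = Some c" using Some xa by simp
      then show ?thesis using True Some \<open>follow x' c ds = follow x c ds \<and> _\<close> by simp
    next
      case False
      then have "lpoint (x' a) = Some c" using Some xa by simp
      then show ?thesis using False Some \<open>follow x' c ds = follow x c ds \<and> _\<close> by simp
    qed
  qed
qed

lemma inputs_agree:
  assumes x: "x \<in> inputs n m" and agree: "\<forall>c\<in>cells n m. x' c = x c"
  shows "x' \<in> inputs n m"
  using x agree unfolding inputs_def by auto

lemma f_local_dir:
  assumes x: "x \<in> inputs n m" and agree: "\<forall>c\<in>cells n m. x' c = x c" and fx: "f n m x"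
  shows "f n m x'"
proof -
  have h1: "\<And>i b. i \<in> {1..n} \<Longrightarrow> b \<in> {1..m} \<Longrightarrow> x' (i, b) = x (i, b)"
    using agree unfolding cells_def by auto
  have h2: "\<And>a. a \<in> cells n m \<Longrightarrow> x' a = x a" using agree by blast
  have h3: "\<And>a p. a \<in> cells n m \<Longrightarrow> follow x' a p = follow x a p"
    using follow_local[OF x agree] by blast
  have h4: "\<And>a p l. a \<in> cells n m \<Longrightarrow> follow x a p = Some l \<Longrightarrow> l \<in> cells n m"
    using follow_local[OF x agree] by blast
  obtain b where b: "b \<in> {1..m}" and A: "\<forall>i\<in>{1..n}. val (x (i, b))"
    and B: "\<forall>b'\<in>{1..m}. (\<forall>i\<in>{1..n}. val (x (i, b'))) \<longrightarrow> b' = b"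
    and C: "\<exists>a\<in>cells n m. snd a = b \<and> x a \<noteq> (True, None, None, None) \<and>
           (\<forall>a'\<in>cells n m. snd a' = b \<and> x a' \<noteq> (True, None, None, None) \<longrightarrow> a' = a) \<and>
           (\<forall>j\<in>{1..m} - {b}. \<exists>l. follow x a (T_path m j) = Some l \<and> snd l = j \<and>
               \<not> val (x l) \<and> bpoint (x l) = Some b)"
    using fx unfolding f_def by blast
  obtain a where a: "a \<in> cells n m" "snd a = b" "x a \<noteq> (True, None, None, None)"
    and C2: "\<forall>a'\<in>cells n m. snd a' = b \<and> x a' \<noteq> (True, None, None, None) \<longrightarrow> a' = a"
    and C3: "\<forall>j\<in>{1..m} - {b}. \<exists>l. follow x a (T_path m j) = Some l \<and> snd l = j \<and>
               \<not> val (x l) \<and> bpoint (x l) = Some b"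
    using C by blast
  have A': "\<forall>i\<in>{1..n}. val (x' (i, b))" using A h1 b by simp
  have B': "\<forall>b'\<in>{1..m}. (\<forall>i\<in>{1..n}. val (x' (i, b'))) \<longrightarrow> b' = b"
    using B h1 by simp
  have a': "x' a \<noteq> (True, None, None, None)" using a h2 by simp
  have C2': "\<forall>a'\<in>cells n m. snd a' = b \<and> x' a' \<noteq> (True, None, None, None) \<longrightarrow> a' = a"
    using C2 h2 by simp
  have C3': "\<forall>j\<in>{1..m} - {b}. \<exists>l. follow x' a (T_path m j) = Some l \<and> snd l = j \<and>
               \<not> val (x' l) \<and> bpoint (x' l) = Some b"
  proof
    fix j assume j: "j \<in> {1..m} - {b}"
    obtain l where l: "follow x a (T_path m j) = Some l" "snd l = j" "\<not> val (x l)" "bpoint (x l) = Some b"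
      using C3 j by blast
    have "l \<in> cells n m" using h4[OF a(1) l(1)] .
    then have "x' l = x l" using h2 by blast
    then show "\<exists>l. follow x' a (T_path m j) = Some l \<and> snd l = j \<and> \<not> val (x' l) \<and> bpoint (x' l) = Some b"
      using l h3[OF a(1)] by auto
  qed
  show ?thesis unfolding f_def using b A' B' a(1,2) a' C2' C3' by blast
qed

lemma f_local:
  assumes x: "x \<in> inputs n m" and agree: "\<forall>c\<in>cells n m. x' c = x c"
  shows "f n m x' = f n m x"
proof
  show "f n m x' \<Longrightarrow> f n m x"
    by (rule f_local_dir[OF inputs_agree[OF x agree]]) (use agree in auto)
  show "f n m x \<Longrightarrow> f n m x'" by (rule f_local_dir[OF x agree])
qed

primrec build :: "nat \<Rightarrow> nat \<Rightarrow> cell list \<Rightarrow> (cell \<Rightarrow> sym) \<Rightarrow> dtree" where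
  "build n m [] acc = Leaf (f n m acc)"
| "build n m (c # cs) acc = Query c (\<lambda>v. build n m cs (acc(c := v)))"

lemma eval_build: "eval (build n m cs acc) x = f n m (\<lambda>c. if c \<in> set cs then x c else acc c)"
proof (induction cs arbitrary: acc)
  case Nil then show ?case by simp
next
  case (Cons c cs)
  have "(\<lambda>c'. if c' \<in> set cs then x c' else (acc(c := x c)) c') = (\<lambda>c'. if c' \<in> set (c # cs) then x c' else acc c')"
    by (rule ext) auto
  then show ?case using Cons by simp
qed

lemma cost_build: "cost (build n m cs acc) x = length cs"
  by (induction cs arbitrary: acc) auto

lemma queries_build: "set cs \<subseteq> A \<Longrightarrow> queries_in A (build n m cs acc)"
  by (induction cs arbitrary: acc) auto

lemma D_exists: "\<exists>k t. computes n m t \<and> (\<forall>x\<in>inputs n m. cost t x \<le> k)"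
proof -
  obtain cs where cs: "set cs = cells n m" using finite_list[OF finite_cells] by blast
  define t where "t = build n m cs (\<lambda>_. blank1)"
  have "computes n m t" unfolding computes_def t_def
  proof
    show "queries_in (cells n m) (build n m cs (\<lambda>_. blank1))" using cs queries_build by simp
    show "\<forall>x\<in>inputs n m. eval (build n m cs (\<lambda>_. blank1)) x = f n m x"
    proof
      fix x assume x: "x \<in> inputs n m"
      show "eval (build n m cs (\<lambda>_. blank1)) x = f n m x"
        unfolding eval_build by (rule f_local[OF x]) (simp add: cs)
    qed
  qed
  moreover have "\<forall>x\<in>inputs n m. cost t x \<le> length cs" unfolding t_def using cost_build by simp
  ultimately show ?thesis by blast
qed

lemma enum_hit: assumes "b \<in> {1..m}" "j \<in> {1..m}" "b \<noteq> j" shows "\<exists>s<m. enum m j s = b"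
proof (cases "b < j")
  case True
  then show ?thesis using assms by (intro exI[of _ "b - 1"]) (auto simp: enum_def)
next
  case False
  then show ?thesis using assms by (intro exI[of _ "b - 2"]) (auto simp: enum_def)
qed

lemma Qcol_fin: "Inv m \<sigma> \<Longrightarrow> finite (Qcol \<sigma> j)"
proof -
  assume I: "Inv m \<sigma>"
  have "Qcol \<sigma> j \<subseteq> cells (2*m) m" using I unfolding Inv_def Qcol_def by auto
  then show ?thesis using finite_cells finite_subset by blast
qed

lemma col_full:
  assumes I: "Inv m \<sigma>" and full: "\<forall>i\<in>{1..2*m}. (i, j) \<in> dom \<sigma>"
  shows "2 * m \<le> card (Qcol \<sigma> j)"
proof -
  have "{1..2*m} \<times> {j} \<subseteq> Qcol \<sigma> j" using full unfolding Qcol_def by auto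
  then have "card ({1..2*m} \<times> {j}) \<le> card (Qcol \<sigma> j)" using Qcol_fin[OF I] card_mono by blast
  then show ?thesis by (simp add: card_cartesian_product)
qed

lemma zero_lemma:
  assumes I: "Inv m \<sigma>" and m: "m \<ge> 1"
  shows "\<not> f (2*m) m (\<lambda>c. case \<sigma> c of Some v \<Rightarrow> v | None \<Rightarrow> (False, None, None, None))"
    (is "\<not> f _ _ ?x0")
proof
  assume "f (2*m) m ?x0"
  then obtain b where b: "b \<in> {1..m}" and A: "\<forall>i\<in>{1..2*m}. val (?x0 (i, b))"
    unfolding f_def by blast
  show False
  proof (cases "\<forall>i\<in>{1..2*m}. (i, b) \<in> dom \<sigma>")
    case False
    then obtain i where i: "i \<in> {1..2*m}" "(i, b) \<notin> dom \<sigma>" by blast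
    then have "\<sigma> (i, b) = None" by blast
    then show False using A i(1) unfolding val_def by force
  next
    case True
    then have "2 * m \<le> card (Qcol \<sigma> b)" using col_full[OF I] by blast
    then have "0 + m < card (Qcol \<sigma> b)" using m by simp
    then obtain c where c: "c \<in> Qcol \<sigma> b" "\<sigma> c = Some (False, None, None, Some (enum m b 0))"
      using I unfolding Inv_def by blast
    then have "c \<in> cells (2*m) m" "snd c = b" using I unfolding Inv_def Qcol_def by auto
    then obtain i where "c = (i, b)" "i \<in> {1..2*m}" unfolding cells_def by auto
    then show False using A c unfolding val_def by force
  qed
qed

lemma dom_sum:
  assumes I: "Inv m \<sigma>"
  shows "card (dom \<sigma>) = (\<Sum>j\<in>{1..m}. card (Qcol \<sigma> j))"
proof -
  have I1: "dom \<sigma> \<subseteq> cells (2*m) m" using I unfolding Inv_def by blast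
  have "dom \<sigma> = (\<Union>j\<in>{1..m}. Qcol \<sigma> j)"
  proof
    show "dom \<sigma> \<subseteq> (\<Union>j\<in>{1..m}. Qcol \<sigma> j)"
    proof
      fix c assume c: "c \<in> dom \<sigma>"
      then have "snd c \<in> {1..m}" using I1 unfolding cells_def by (auto simp: mem_Times_iff)
      then show "c \<in> (\<Union>j\<in>{1..m}. Qcol \<sigma> j)" using c unfolding Qcol_def by blast
    qed
    show "(\<Union>j\<in>{1..m}. Qcol \<sigma> j) \<subseteq> dom \<sigma>" unfolding Qcol_def by blast
  qed
  moreover have "card (\<Union>j\<in>{1..m}. Qcol \<sigma> j) = (\<Sum>j\<in>{1..m}. card (Qcol \<sigma> j))"
    by (rule card_UN_disjoint) (use Qcol_fin[OF I] in \<open>auto simp: Qcol_def\<close>)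
  ultimately show ?thesis by simp
qed

lemma exists_b:
  assumes I: "Inv m \<sigma>" and small: "card (dom \<sigma>) < m * m"
  shows "\<exists>b\<in>{1..m}. card (Qcol \<sigma> b) \<le> m"
proof (rule ccontr)
  assume "\<not> ?thesis"
  then have "\<forall>j\<in>{1..m}. Suc m \<le> card (Qcol \<sigma> j)" by auto
  then have "(\<Sum>j\<in>{1..m}. Suc m) \<le> (\<Sum>j\<in>{1..m}. card (Qcol \<sigma> j))" by (intro sum_mono) auto
  then have "m * Suc m \<le> card (dom \<sigma>)" using dom_sum[OF I] by simp
  then show False using small by (simp add: algebra_simps)
qed

lemma one_lemma:
  assumes Iv: "Inv m \<sigma>" and m: "m \<ge> 2" and small: "card (dom \<sigma>) < m * m"
  shows "\<exists>x1\<in>inputs (2*m) m. cons \<sigma> x1 \<and> f (2*m) m x1"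
proof -
  have I1: "dom \<sigma> \<subseteq> cells (2*m) m"
   and I2: "\<forall>c v. \<sigma> c = Some v \<longrightarrow> v = blank1 \<or> (\<exists>k\<in>{1..m}. v = (False,None,None,Some k))"
   and I3: "\<forall>j. card (Qcol \<sigma> j) \<le> m \<longrightarrow> (\<forall>c\<in>Qcol \<sigma> j. \<sigma> c = Some blank1)"
   and I4: "\<forall>j s. s + m < card (Qcol \<sigma> j) \<longrightarrow> (\<exists>c\<in>Qcol \<sigma> j. \<sigma> c = Some (False,None,None,Some (enum m j s)))"
    using Iv unfolding Inv_def by blast+
  obtain b where b: "b \<in> {1..m}" and bq: "card (Qcol \<sigma> b) \<le> m"
    using exists_b[OF Iv small] by blast
  have colb: "\<And>c. c \<in> Qcol \<sigma> b \<Longrightarrow> \<sigma> c = Some blank1" using I3 bq by blast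
  obtain a where a: "a \<in> cells (2*m) m" "snd a = b" "\<sigma> a = None"
  proof -
    have "\<not> (\<forall>i\<in>{1..2*m}. (i,b) \<in> dom \<sigma>)"
    proof
      assume "\<forall>i\<in>{1..2*m}. (i,b) \<in> dom \<sigma>"
      then have "2 * m \<le> card (Qcol \<sigma> b)" using col_full[OF Iv] by blast
      then show False using bq m by simp
    qed
    then obtain i where i: "i \<in> {1..2*m}" "(i,b) \<notin> dom \<sigma>" by blast
    then have "\<sigma> (i, b) = None" by blast
    then show ?thesis using that[of "(i,b)"] b i(1) unfolding cells_def by auto
  qed
  define J where "J = {1..m} - {b}"
  define leafv :: sym where "leafv = (False, None, None, Some b)"
  have ex_leaf: "\<exists>c. c \<in> cells (2*m) m \<and> snd c = j \<and> (\<sigma> c = None \<or> \<sigma> c = Some leafv)" if j: "j \<in> J" for j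
  proof (cases "\<forall>i\<in>{1..2*m}. (i,j) \<in> dom \<sigma>")
    case False
    then obtain i where i: "i \<in> {1..2*m}" "(i,j) \<notin> dom \<sigma>" by blast
    then have "\<sigma> (i, j) = None" by blast
    moreover have "(i, j) \<in> cells (2*m) m" using i j unfolding cells_def J_def by auto
    ultimately show ?thesis by auto
  next
    case True
    then have c2: "2 * m \<le> card (Qcol \<sigma> j)" using col_full[OF Iv] by blast
    obtain s where s: "s < m" "enum m j s = b" using enum_hit[of b m j] b j unfolding J_def by auto
    have "s + m < card (Qcol \<sigma> j)" using s c2 by simp
    then obtain c where c: "c \<in> Qcol \<sigma> j" "\<sigma> c = Some (False,None,None,Some (enum m j s))"
      using I4 by blast
    then have "c \<in> cells (2*m) m" "snd c = j" using I1 unfolding Qcol_def by auto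
    moreover have "\<sigma> c = Some leafv" using c s unfolding leafv_def by simp
    ultimately show ?thesis by blast
  qed
  define ell where "ell j = (SOME c. c \<in> cells (2*m) m \<and> snd c = j \<and> (\<sigma> c = None \<or> \<sigma> c = Some leafv))" for j
  have ell: "ell j \<in> cells (2*m) m \<and> snd (ell j) = j \<and> (\<sigma> (ell j) = None \<or> \<sigma> (ell j) = Some leafv)" if "j \<in> J" for j
    unfolding ell_def by (rule someI_ex[OF ex_leaf[OF that]])
  define L where "L = ell ` J"
  define T where "T = T_tree m"
  define IP where "IP = ip T"
  have lenT: "length (leaf_paths T) = m" unfolding T_def using T_len m by simp
  have cardIP: "card IP + 1 = m" unfolding IP_def using ip_card[of T] lenT by simp
  have root: "[] \<in> IP"
  proof (cases T)
    case Lf then show ?thesis using lenT m by simp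
  next
    case (Nd l r) then show ?thesis unfolding IP_def by simp
  qed
  have finIP: "finite IP" unfolding IP_def by (rule ip_finite)
  define colb where "colb = {1..2*m} \<times> {b}"
  define S where "S = cells (2*m) m - colb - dom \<sigma> - L"
  have finS: "finite S" unfolding S_def using finite_cells by auto
  have cardS: "card (IP - {[]}) \<le> card S"
  proof -
    have cc: "card (cells (2*m) m) = 2*m*m" unfolding cells_def by (simp add: card_cartesian_product)
    have cb: "card colb = 2*m" unfolding colb_def by (simp add: card_cartesian_product)
    have sub: "colb \<subseteq> cells (2*m) m" unfolding colb_def cells_def using b by auto
    have c0: "card (cells (2*m) m - colb) + 2*m = 2*m*m"
      using card_Diff_subset[OF _ sub] cc cb card_mono[OF finite_cells sub] unfolding colb_def
      by (simp add: finite_cells)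
    have finL: "finite L" unfolding L_def J_def by simp
    have finD: "finite (dom \<sigma>)" using I1 finite_cells finite_subset by blast
    have "cells (2*m) m - colb \<subseteq> S \<union> dom \<sigma> \<union> L" unfolding S_def by blast
    then have "card (cells (2*m) m - colb) \<le> card (S \<union> dom \<sigma> \<union> L)"
      using finS finL finD by (intro card_mono) auto
    also have "\<dots> \<le> card S + card (dom \<sigma>) + card L"
      by (meson add_le_mono card_Un_le le_trans order_refl)
    finally have c1: "card (cells (2*m) m - colb) \<le> card S + card (dom \<sigma>) + card L" .
    have cL: "card L + 1 \<le> m"
    proof -
      have "card L \<le> card J" unfolding L_def J_def by (rule card_image_le) simp
      moreover have "card J + 1 = m" unfolding J_def using b by (simp add: card_Diff_singleton)
      ultimately show ?thesis by simp
    qed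
    have sq: "4 * m \<le> m * m + 4"
    proof -
      obtain q where "m = q + 2" using m by (metis add.commute le_Suc_ex)
      then show ?thesis by (simp add: algebra_simps)
    qed
    have "card IP > 0" using root finIP card_gt_0_iff by blast
    then have cI: "card (IP - {[]}) + 2 = m" using cardIP root finIP by (simp add: card_Diff_singleton)
    show ?thesis using c0 c1 cL sq cI small by linarith
  qed
  obtain h where h: "h ` (IP - {[]}) \<subseteq> S" "inj_on h (IP - {[]})"
    using card_le_inj[OF _ finS cardS] finIP by blast
  define g where "g p = (if p = [] then a else h p)" for p
  have gS: "g p \<in> S" if "p \<in> IP" "p \<noteq> []" for p using h(1) that unfolding g_def by auto
  have ga: "g [] = a" unfolding g_def by simp
  have aS: "a \<notin> S" unfolding S_def colb_def using a unfolding cells_def by auto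
  have ginj: "inj_on g IP"
  proof (rule inj_onI)
    fix p q assume p: "p \<in> IP" and q: "q \<in> IP" and e: "g p = g q"
    show "p = q"
    proof (cases "p = []"; cases "q = []")
      assume "p = []" "q = []" then show ?thesis by simp
    next
      assume "p = []" "q \<noteq> []" then show ?thesis using e gS[OF q] aS ga by simp
    next
      assume "p \<noteq> []" "q = []" then show ?thesis using e gS[OF p] aS ga by simp
    next
      assume pq: "p \<noteq> []" "q \<noteq> []"
      then have "h p = h q" using e unfolding g_def by simp
      then show ?thesis using h(2) p q pq unfolding inj_on_def by blast
    qed
  qed
  have tp: "T_path m j \<in> set (leaf_paths T)" if "j \<in> {1..m}" for j
    unfolding T_path_def T_def[symmetric] using that lenT by auto
  have tp_inj: "j = j'" if "j \<in> {1..m}" "j' \<in> {1..m}" "T_path m j = T_path m j'" for j j'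
  proof -
    have "leaf_paths T ! (j - 1) = leaf_paths T ! (j' - 1)" using that(3) unfolding T_path_def T_def .
    then have "j - 1 = j' - 1" using nth_eq_iff_index_eq[OF lp_distinct, of "j - 1" T "j' - 1"] lenT that(1,2) by auto
    then show ?thesis using that(1,2) by auto
  qed
  have tp_nIP: "T_path m j \<notin> IP" if "j \<in> {1..m}" for j
    using lp_ip_disj[OF tp[OF that]] unfolding IP_def .
  define cp where "cp q = (if q \<in> IP then g q else if (\<exists>j\<in>J. q = T_path m j) then ell (THE j. j \<in> J \<and> q = T_path m j) else a)" for q
  have cp_leaf: "cp (T_path m j) = ell j" if j: "j \<in> J" for j
  proof -
    have jm: "j \<in> {1..m}" using j unfolding J_def by auto
    have ex: "\<exists>j'\<in>J. T_path m j = T_path m j'" using j by blast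
    have the: "(THE j'. j' \<in> J \<and> T_path m j = T_path m j') = j"
    proof (rule the_equality)
      show "j \<in> J \<and> T_path m j = T_path m j" using j by blast
    next
      fix j' assume "j' \<in> J \<and> T_path m j = T_path m j'"
      then show "j' = j" using tp_inj[of j j'] jm unfolding J_def by auto
    qed
    show ?thesis unfolding cp_def using tp_nIP[OF jm] ex the by presburger
  qed
  have cellsS: "S \<subseteq> cells (2*m) m" unfolding S_def by blast
  have cp_cells: "cp q \<in> cells (2*m) m" for q
  proof (cases "q \<in> IP")
    case True
    show ?thesis
    proof (cases "q = []")
      case True then show ?thesis unfolding cp_def using root ga a(1) by simp
    next
      case False then have "g q \<in> S" using gS \<open>q \<in> IP\<close> by blast
      then show ?thesis unfolding cp_def using \<open>q \<in> IP\<close> cellsS by auto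
    qed
  next
    case nI: False
    show ?thesis
    proof (cases "\<exists>j\<in>J. q = T_path m j")
      case True
      then obtain j where jj: "j \<in> J" "q = T_path m j" by blast
      then have "cp q = ell j" using cp_leaf by blast
      then show ?thesis using ell[OF jj(1)] by simp
    next
      case False
      then show ?thesis unfolding cp_def using nI a(1) by simp
    qed
  qed
  have ell_notg: "ell j \<notin> g ` IP" if j: "j \<in> J" for j
  proof
    assume "ell j \<in> g ` IP"
    then obtain p where p: "p \<in> IP" "ell j = g p" by blast
    show False
    proof (cases "p = []")
      case True
      then have "snd (ell j) = b" using p a ga by simp
      then show False using ell[OF j] j unfolding J_def by auto
    next
      case False
      then have "ell j \<in> S" using gS p by simp
      then show False unfolding S_def L_def using j by blast
    qed
  qed
  define x1 where "x1 c = (if c \<in> g ` IP then (c = a, Some (cp (inv_into IP g c @ [False])), Some (cp (inv_into IP g c @ [True])), None)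
     else if c \<in> L then leafv
     else (case \<sigma> c of Some v \<Rightarrow> v | None \<Rightarrow> if snd c = b then blank1 else (False, None, None, None)))" for c
  have x1g: "x1 (g p) = (g p = a, Some (cp (p @ [False])), Some (cp (p @ [True])), None)" if "p \<in> IP" for p
    unfolding x1_def using that ginj by simp
  have x1L: "x1 (ell j) = leafv" if "j \<in> J" for j
    unfolding x1_def L_def using that ell_notg by auto
  have x1s: "x1 c = (case \<sigma> c of Some v \<Rightarrow> v | None \<Rightarrow> if snd c = b then blank1 else (False, None, None, None))"
    if "c \<notin> g ` IP" "c \<notin> L" for c
    unfolding x1_def using that by simp
  have Lcol: "snd c \<noteq> b" if cL: "c \<in> L" for c
  proof -
    obtain j where j: "j \<in> J" "c = ell j" using cL unfolding L_def by blast
    then have "snd c = j" using ell[OF j(1)] by simp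
    then show ?thesis using j(1) unfolding J_def by simp
  qed
  have gcol: "g p = a" if "p \<in> IP" "snd (g p) = b" for p
  proof (rule ccontr)
    assume "g p \<noteq> a"
    then have "p \<noteq> []" using ga by auto
    then have "g p \<in> S" using gS that(1) by blast
    moreover have "g p \<in> cells (2*m) m" using calculation cellsS by blast
    ultimately show False using that(2) unfolding S_def colb_def cells_def by auto
  qed
  have gdom: "c \<notin> dom \<sigma>" if cG: "c \<in> g ` IP" for c
  proof -
    obtain p where p: "p \<in> IP" "c = g p" using cG by blast
    show ?thesis
    proof (cases "p = []")
      case True then show ?thesis using p ga a(3) by auto
    next
      case False then have "g p \<in> S" using gS p(1) by blast
      then show ?thesis using p unfolding S_def by blast
    qed
  qed
  have cons1: "cons \<sigma> x1" unfolding cons_def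
  proof (intro allI impI)
    fix c v assume cv: "\<sigma> c = Some v"
    then have nG: "c \<notin> g ` IP" using gdom by blast
    show "x1 c = v"
    proof (cases "c \<in> L")
      case True
      then obtain j where j: "j \<in> J" "c = ell j" unfolding L_def by blast
      then have "\<sigma> c = Some leafv" using ell[OF j(1)] cv by auto
      then show ?thesis using x1L[OF j(1)] j cv by simp
    next
      case False
      then show ?thesis using x1s[OF nG False] cv by simp
    qed
  qed
  have valid1: "valid_sym (2*m) m (x1 c)" if "c \<in> cells (2*m) m" for c
  proof (cases "c \<in> g ` IP")
    case True
    then obtain p where p: "p \<in> IP" "c = g p" by blast
    show ?thesis unfolding valid_sym_def lpoint_def rpoint_def bpoint_def using x1g[OF p(1)] p cp_cells by simp
  next
    case nG: False
    show ?thesis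
    proof (cases "c \<in> L")
      case True
      then obtain j where j: "j \<in> J" "c = ell j" unfolding L_def by blast
      then show ?thesis unfolding valid_sym_def lpoint_def rpoint_def bpoint_def using x1L[OF j(1)] b
        unfolding leafv_def by simp
    next
      case False
      show ?thesis
      proof (cases "\<sigma> c")
        case None
        then show ?thesis using x1s[OF nG False] unfolding valid_sym_def lpoint_def rpoint_def bpoint_def blank1_def by simp
      next
        case (Some v)
        then have "v = blank1 \<or> (\<exists>k\<in>{1..m}. v = (False,None,None,Some k))" using I2 by blast
        then show ?thesis using x1s[OF nG False] Some unfolding valid_sym_def lpoint_def rpoint_def bpoint_def blank1_def by auto
      qed
    qed
  qed
  have inp1: "x1 \<in> inputs (2*m) m" unfolding inputs_def using valid1 by blast
  have fol: "\<forall>p. p @ s \<in> set (leaf_paths T) \<longrightarrow> (p \<in> IP \<or> s = []) \<longrightarrow> follow x1 (cp p) s = Some (cp (p @ s))" for s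
  proof (induction s)
    case Nil then show ?case by simp
  next
    case (Cons d s)
    show ?case
    proof (intro allI impI)
      fix p assume h1: "p @ d # s \<in> set (leaf_paths T)" and h2: "p \<in> IP \<or> d # s = []"
      have pI: "p \<in> IP" using h2 by simp
      have cpp: "cp p = g p" unfolding cp_def using pI by simp
      have ptr: "(if d then rpoint (x1 (cp p)) else lpoint (x1 (cp p))) = Some (cp (p @ [d]))"
        unfolding cpp x1g[OF pI] lpoint_def rpoint_def by (cases d) simp_all
      have h1': "(p @ [d]) @ s \<in> set (leaf_paths T)" using h1 by simp
      have h2': "p @ [d] \<in> IP \<or> s = []"
      proof (cases "s = []")
        case False then show ?thesis using lp_prefix[OF h1'[unfolded T_def]] unfolding IP_def T_def by blast
      qed simp
      have "follow x1 (cp (p @ [d])) s = Some (cp ((p @ [d]) @ s))" using Cons.IH h1' h2' by blast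
      then show "follow x1 (cp p) (d # s) = Some (cp (p @ d # s))" using ptr by simp
    qed
  qed
  have cp0: "cp [] = a" unfolding cp_def using root ga by simp
  have x1a: "x1 a = (True, Some (cp [False]), Some (cp [True]), None)" using x1g[OF root] ga by simp
  have colb_val: "x1 c = blank1" if "c \<in> cells (2*m) m" "snd c = b" "c \<noteq> a" for c
  proof -
    have nG: "c \<notin> g ` IP" using gcol that by blast
    have nL: "c \<notin> L" using Lcol that by blast
    show ?thesis
    proof (cases "\<sigma> c")
      case None then show ?thesis using x1s[OF nG nL] that by simp
    next
      case (Some v)
      then have "c \<in> Qcol \<sigma> b" unfolding Qcol_def using that by auto
      then have "\<sigma> c = Some blank1" using colb by blast
      then show ?thesis using x1s[OF nG nL] by simp
    qed
  qed
  have fx1: "f (2*m) m x1" unfolding f_def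
  proof (rule bexI[OF _ b], intro conjI)
    show "\<forall>i\<in>{1..2*m}. val (x1 (i, b))"
    proof
      fix i assume i: "i \<in> {1..2*m}"
      have c: "(i, b) \<in> cells (2*m) m" using i b unfolding cells_def by auto
      show "val (x1 (i, b))"
      proof (cases "(i, b) = a")
        case True then show ?thesis using x1a unfolding val_def by simp
      next
        case False then show ?thesis using colb_val[OF c _ False] unfolding val_def blank1_def by simp
      qed
    qed
    show "\<forall>b'\<in>{1..m}. (\<forall>i\<in>{1..2*m}. val (x1 (i, b'))) \<longrightarrow> b' = b"
    proof (intro ballI impI)
      fix b' assume b': "b' \<in> {1..m}" and all: "\<forall>i\<in>{1..2*m}. val (x1 (i, b'))"
      show "b' = b"
      proof (rule ccontr)
        assume "b' \<noteq> b"
        then have j: "b' \<in> J" using b' unfolding J_def by auto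
        obtain i j' where e: "ell b' = (i, j')" by fastforce
        have "i \<in> {1..2*m}" "j' = b'" using ell[OF j] e unfolding cells_def by auto
        then have "val (x1 (ell b'))" using all e by simp
        then show False using x1L[OF j] unfolding leafv_def val_def by simp
      qed
    qed
    show "\<exists>a\<in>cells (2*m) m. snd a = b \<and> x1 a \<noteq> (True, None, None, None) \<and>
           (\<forall>a'\<in>cells (2*m) m. snd a' = b \<and> x1 a' \<noteq> (True, None, None, None) \<longrightarrow> a' = a) \<and>
           (\<forall>j\<in>{1..m} - {b}. \<exists>l. follow x1 a (T_path m j) = Some l \<and> snd l = j \<and>
               \<not> val (x1 l) \<and> bpoint (x1 l) = Some b)"
    proof (rule bexI[OF _ a(1)], intro conjI)
      show "snd a = b" by (rule a(2))
      show "x1 a \<noteq> (True, None, None, None)" using x1a by simp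
      show "\<forall>a'\<in>cells (2*m) m. snd a' = b \<and> x1 a' \<noteq> (True, None, None, None) \<longrightarrow> a' = a"
        using colb_val unfolding blank1_def by blast
      show "\<forall>j\<in>{1..m} - {b}. \<exists>l. follow x1 a (T_path m j) = Some l \<and> snd l = j \<and>
               \<not> val (x1 l) \<and> bpoint (x1 l) = Some b"
      proof
        fix j assume j0: "j \<in> {1..m} - {b}"
        then have j: "j \<in> J" unfolding J_def .
        have "[] @ T_path m j \<in> set (leaf_paths T)" using tp j0 by simp
        then have "follow x1 (cp []) (T_path m j) = Some (cp ([] @ T_path m j))" using fol root by blast
        then have "follow x1 a (T_path m j) = Some (ell j)" using cp0 cp_leaf[OF j] by simp
        then show "\<exists>l. follow x1 a (T_path m j) = Some l \<and> snd l = j \<and> \<not> val (x1 l) \<and> bpoint (x1 l) = Some b"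
          using ell[OF j] x1L[OF j] unfolding leafv_def val_def bpoint_def by auto
      qed
    qed
  qed
  show ?thesis using inp1 cons1 fx1 by blast
qed


lemma lower:
  assumes ct: "computes (2*m) m t" and m: "m \<ge> 2"
  shows "\<exists>x\<in>inputs (2*m) m. m * m \<le> cost t x"
proof -
  have qi: "queries_in (cells (2*m) m) t" using ct unfolding computes_def by blast
  have ev: "\<forall>x\<in>inputs (2*m) m. eval t x = f (2*m) m x" using ct unfolding computes_def by blast
  define \<sigma> where "\<sigma> = run t m Map.empty"
  have R: "Inv m \<sigma> \<and> Map.empty \<subseteq>\<^sub>m \<sigma> \<and>
     (\<forall>x. cons \<sigma> x \<longrightarrow> card (dom \<sigma>) \<le> card (dom (Map.empty :: cell \<Rightarrow> sym option)) + cost t x) \<and>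
     (\<forall>x y. cons \<sigma> x \<longrightarrow> cons \<sigma> y \<longrightarrow> eval t x = eval t y)"
    unfolding \<sigma>_def by (rule run_prop[OF qi Inv_empty]) (use m in simp)
  then have Iv: "Inv m \<sigma>" by blast
  define x0 where "x0 = (\<lambda>c. case \<sigma> c of Some v \<Rightarrow> v | None \<Rightarrow> (False, None, None, None))"
  have cons0: "cons \<sigma> x0" unfolding cons_def x0_def by simp
  have I2: "\<forall>c v. \<sigma> c = Some v \<longrightarrow> v = blank1 \<or> (\<exists>k\<in>{1..m}. v = (False,None,None,Some k))"
    using Iv unfolding Inv_def by blast
  have inp0: "x0 \<in> inputs (2*m) m" unfolding inputs_def
  proof (intro CollectI ballI)
    fix c assume "c \<in> cells (2*m) m"
    show "valid_sym (2*m) m (x0 c)"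
    proof (cases "\<sigma> c")
      case None then show ?thesis unfolding x0_def valid_sym_def lpoint_def rpoint_def bpoint_def by simp
    next
      case (Some v)
      then have "v = blank1 \<or> (\<exists>k\<in>{1..m}. v = (False,None,None,Some k))" using I2 by blast
      then show ?thesis using Some unfolding x0_def valid_sym_def lpoint_def rpoint_def bpoint_def blank1_def by auto
    qed
  qed
  have c0: "card (dom \<sigma>) \<le> cost t x0" using R cons0 by simp
  show ?thesis
  proof (cases "m * m \<le> card (dom \<sigma>)")
    case True then show ?thesis using c0 inp0 by (meson le_trans)
  next
    case False
    then have small: "card (dom \<sigma>) < m * m" by simp
    obtain x1 where x1: "x1 \<in> inputs (2*m) m" "cons \<sigma> x1" "f (2*m) m x1"
      using one_lemma[OF Iv m small] by blast
    have "eval t x0 = eval t x1" using R cons0 x1(2) by blast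
    then have "f (2*m) m x0" using ev inp0 x1 by simp
    moreover have "\<not> f (2*m) m x0" unfolding x0_def by (rule zero_lemma[OF Iv]) (use m in simp)
    ultimately show ?thesis by blast
  qed
qed

theorem theorem2:
  shows "\<exists>m0::nat. \<forall>m\<ge>m0. m \<ge> 1 \<longrightarrow> m ^ 2 \<le> D (2 * m) m"
proof (intro exI[of _ 2] allI impI)
  fix m :: nat assume m: "2 \<le> m" "m \<ge> 1"
  have "\<exists>t. computes (2*m) m t \<and> (\<forall>x\<in>inputs (2*m) m. cost t x \<le> D (2*m) m)"
    unfolding D_def by (rule LeastI_ex) (rule D_exists)
  then obtain t where t: "computes (2*m) m t" "\<forall>x\<in>inputs (2*m) m. cost t x \<le> D (2*m) m" by blast
  obtain x where x: "x \<in> inputs (2*m) m" "m * m \<le> cost t x" using lower[OF t(1) m(1)] by blast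
  show "m ^ 2 \<le> D (2 * m) m" using x t(2) by (simp add: power2_eq_square) (meson le_trans)
qed

end
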